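(* Let $\mathcal X$ be a real normed space and $\mathcal Y$ a normed space. Let $c:\mathcal X\to\mathcal Y$ be an orthogonally constant mapping. If $x,y\in\mathcal X$ satisfy $\|x\|=\|y\|$, then $c(x)=c(y)$.
   Context: For $x,y$ in a real normed space $\mathcal X$, isosceles orthogonality is defined by $x\perp y$ if and only if $\|x+y\|=\|x-y\|$. A mapping $c:\mathcal X\to\mathcal Y$ is called orthogonally constant if $c(x+y)=c(x-y)$ for all $x,y\in\mathcal X$ with $x\perp y$. *)

theory Defs
  imports "HOL-Analysis.Analysis"
begin

definition iso_orth :: "'a::real_normed_vector \<Rightarrow> 'a \<Rightarrow> bool" where
  "iso_orth x y \<longleftrightarrow> norm (x + y) = norm (x - y)"

definition orth_constant :: "('a::real_normed_vector \<Rightarrow> 'b) \<Rightarrow> bool" where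
  "orth_constant c \<longleftrightarrow> (\<forall>x y. iso_orth x y \<longrightarrow> c (x + y) = c (x - y))"

end

theory Submission
  imports Defs
begin

theorem lemma2p2:
  fixes c :: "'a::real_normed_vector \<Rightarrow> 'b::real_normed_vector"
  assumes "orth_constant c"
    and "norm x = norm y"
  shows "c x = c y"
proof -
  define u where "u = (1/2) *\<^sub>R (x + y)"
  define v where "v = (1/2) *\<^sub>R (x - y)"
  have e1: "u + v = x" unfolding u_def v_def by (simp add: scaleR_add_right scaleR_diff_right) (metis scaleR_add_left field_sum_of_halves scaleR_one)
  have e2: "u - v = y" unfolding u_def v_def by (simp add: scaleR_add_right scaleR_diff_right) (metis scaleR_add_left field_sum_of_halves scaleR_one add_diff_cancel_left)
  have "iso_orth u v" unfolding iso_orth_def using e1 e2 assms(2) by simp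
  then have "c (u + v) = c (u - v)" using assms(1) unfolding orth_constant_def by blast
  then show ?thesis using e1 e2 by simp
qed

end
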